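(* Let $n\ge2$, $P_{n-1}(\lambda)=\mu_1\cdots\mu_n$ with $\mu_i=\sum_{j\neq i}\lambda_j$, $\mathcal P_{n-1}=\{\lambda\in\mathbb R^n:\mu_i>0\ \forall i\}$, and $f(\lambda)=\log P_{n-1}(\lambda)$ on $\mathcal P_{n-1}$. Let $\lambda,\underline\lambda\in\mathcal P_{n-1}$, write $\underline\mu_i=\sum_{j\ne i}\underline\lambda_j$, and let $\varepsilon>0$ with $\min_i\underline\mu_i\ge\varepsilon$. Suppose $\min_j\mu_j\le\frac{\varepsilon}{2n}$. Then $$\sum_{i=1}^n\frac1{\mu_i}\ge\frac{2n}{\varepsilon},\qquad \sum_{i=1}^nf_i(\lambda)(\underline\lambda_i-\lambda_i)\ge\frac{\varepsilon}{2}\sum_{i=1}^n\frac1{\mu_i}=\frac{\varepsilon}{2(n-1)}\sum_{i=1}^nf_i(\lambda),$$ where $f_i=\partial f/\partial\lambda_i$. *)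

theory Defs
  imports "HOL-Analysis.Analysis"
begin

text \<open>Vectors in R^n are modelled as real^'n with a finite index type 'n, n = CARD('n).\<close>

definition mu :: "real^'n \<Rightarrow> 'n \<Rightarrow> real" where
  "mu lam i = (\<Sum>j\<in>UNIV - {i}. lam $ j)"

definition P_n1 :: "real^'n \<Rightarrow> real" where
  "P_n1 lam = (\<Prod>i\<in>UNIV. mu lam i)"

definition P_cone :: "(real^'n) set" where
  "P_cone = {lam. \<forall>i. mu lam i > 0}"

definition logP :: "real^'n \<Rightarrow> real" where
  "logP lam = ln (P_n1 lam)"

definition f_i :: "'n \<Rightarrow> real^'n \<Rightarrow> real" where
  "f_i i lam = deriv (\<lambda>t. logP (lam + t *\<^sub>R axis i 1)) 0"

end

theory Submission
  imports Defs
begin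

lemma mu_shift:
  "mu (lam + t *\<^sub>R axis i 1) k = mu lam k + (if k = i then 0 else t)"
proof -
  have "mu (lam + t *\<^sub>R axis i 1) k = (\<Sum>j\<in>UNIV - {k}. lam $ j + (if j = i then t else 0))"
    unfolding mu_def by (intro sum.cong) (auto simp: axis_def)
  also have "\<dots> = mu lam k + (\<Sum>j\<in>UNIV - {k}. (if j = i then t else 0))"
    unfolding mu_def by (simp add: sum.distrib)
  also have "(\<Sum>j\<in>UNIV - {k}. (if j = i then t else 0)) = (if k = i then 0 else t)"
    by (simp add: sum.delta)
  finally show ?thesis .
qed

lemma fi_formula:
  fixes lam :: "real^'n"
  assumes "lam \<in> P_cone"
  shows "f_i i lam = (\<Sum>k\<in>UNIV. 1 / mu lam k) - 1 / mu lam i"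
proof -
  have pos: "\<And>k. mu lam k > 0" using assms by (simp add: P_cone_def)
  define c where "c k = (if k = i then 0 else (1::real))" for k
  define h where "h t = (\<Sum>k\<in>UNIV. ln (mu lam k + c k * t))" for t
  have "(h has_real_derivative (\<Sum>k\<in>UNIV. c k / mu lam k)) (at 0)"
    unfolding h_def using pos
    by (auto intro!: derivative_eq_intros simp: field_simps)
  moreover have "eventually (\<lambda>t. logP (lam + t *\<^sub>R axis i 1) = h t) (nhds 0)"
  proof -
    define m where "m = Min (range (mu lam))"
    have "m \<in> range (mu lam)" unfolding m_def by (intro Min_in) auto
    hence mpos: "m > 0" using pos by auto
    have mle: "\<And>k. m \<le> mu lam k" unfolding m_def by (intro Min_le) auto
    have "eventually (\<lambda>t. t \<in> ball 0 m) (nhds (0::real))"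
      by (intro eventually_nhds_in_open) (auto simp: mpos)
    thus ?thesis
    proof (rule eventually_mono)
      fix t :: real assume "t \<in> ball 0 m"
      hence t: "\<bar>t\<bar> < m" by (simp add: dist_norm)
      have fp: "\<And>k. mu lam k + c k * t > 0"
        using mle t by (auto simp: c_def abs_less_iff intro: add_pos_nonneg) (smt (verit) mle)+
      have "logP (lam + t *\<^sub>R axis i 1) = ln (\<Prod>k\<in>UNIV. mu lam k + c k * t)"
        unfolding logP_def P_n1_def mu_shift c_def
        by (intro arg_cong[where f=ln] prod.cong) auto
      also have "\<dots> = h t" unfolding h_def
        using fp by (intro ln_prod) (auto, metis less_irrefl)
      finally show "logP (lam + t *\<^sub>R axis i 1) = h t" .
    qed
  qed
  ultimately have "((\<lambda>t. logP (lam + t *\<^sub>R axis i 1)) has_real_derivative (\<Sum>k\<in>UNIV. c k / mu lam k)) (at 0)"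
    by (subst DERIV_cong_ev[OF refl _ refl]) auto
  hence "f_i i lam = (\<Sum>k\<in>UNIV. c k / mu lam k)"
    unfolding f_i_def by (rule DERIV_imp_deriv)
  also have "(\<Sum>k\<in>UNIV. c k / mu lam k) = (\<Sum>k\<in>UNIV. 1 / mu lam k - (if k = i then 1 / mu lam k else 0))"
    by (intro sum.cong) (auto simp: c_def)
  also have "\<dots> = (\<Sum>k\<in>UNIV. 1 / mu lam k) - 1 / mu lam i"
    by (simp add: sum_subtractf sum.delta)
  finally show ?thesis .
qed

lemma mu_alt: "mu x k = (\<Sum>j\<in>UNIV. x $ j) - x $ k"
  unfolding mu_def by (simp add: sum_diff1)

theorem lemma3p1:
  fixes lam lamu :: "real^'n" and eps :: real
  assumes "CARD('n) \<ge> 2"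
    and "lam \<in> P_cone" and "lamu \<in> P_cone"
    and "eps > 0"
    and "Min (range (mu lamu)) \<ge> eps"
    and "Min (range (mu lam)) \<le> eps / (2 * real CARD('n))"
  shows "(\<Sum>i\<in>UNIV. 1 / mu lam i) \<ge> 2 * real CARD('n) / eps
       \<and> (\<Sum>i\<in>UNIV. f_i i lam * (lamu $ i - lam $ i)) \<ge> eps / 2 * (\<Sum>i\<in>UNIV. 1 / mu lam i)
       \<and> eps / 2 * (\<Sum>i\<in>UNIV. 1 / mu lam i) = eps / (2 * (real CARD('n) - 1)) * (\<Sum>i\<in>UNIV. f_i i lam)"
proof -
  define S where "S = (\<Sum>i\<in>UNIV. 1 / mu lam i)"
  define n where "n = real CARD('n)"
  have n2: "n \<ge> 2" using assms(1) unfolding n_def by simp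
  have pos: "\<And>k. mu lam k > 0" using assms(2) by (simp add: P_cone_def)
  have epsle: "eps \<le> mu lamu k" for k
  proof -
    have "Min (range (mu lamu)) \<le> mu lamu k" by (intro Min_le) auto
    thus ?thesis using assms(5) by linarith
  qed
  define m where "m = Min (range (mu lam))"
  have "m \<in> range (mu lam)" unfolding m_def by (intro Min_in) auto
  then obtain k0 where k0: "m = mu lam k0" by auto
  have mpos: "m > 0" using pos k0 by auto
  have mle: "m \<le> eps / (2 * n)" using assms(6) unfolding m_def n_def .
  have "2 * n / eps \<le> 1 / m"
    using mle mpos assms(4) n2 by (simp add: field_simps)
  also have "1 / m \<le> S" unfolding S_def k0
    by (rule member_le_sum) (use pos in \<open>auto intro: less_imp_le\<close>)
  finally have c1: "2 * n / eps \<le> S" .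
  hence c1': "2 * n \<le> eps * S" using assms(4) by (simp add: field_simps)
  define d where "d j = lamu $ j - lam $ j" for j
  define D where "D = (\<Sum>j\<in>UNIV. d j)"
  have "(\<Sum>i\<in>UNIV. f_i i lam * (lamu $ i - lam $ i)) = (\<Sum>i\<in>UNIV. (S - 1 / mu lam i) * d i)"
    using fi_formula[OF assms(2)] unfolding S_def d_def by simp
  also have "\<dots> = S * D - (\<Sum>i\<in>UNIV. d i / mu lam i)"
    unfolding D_def by (simp add: algebra_simps sum_subtractf sum_distrib_left)
  also have "\<dots> = (\<Sum>k\<in>UNIV. (D - d k) / mu lam k)"
    unfolding S_def by (simp add: diff_divide_distrib sum_subtractf sum_distrib_right)
  also have "\<dots> = (\<Sum>k\<in>UNIV. mu lamu k / mu lam k - 1)"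
  proof (intro sum.cong refl)
    fix k
    have "mu lamu k - mu lam k = D - d k"
      unfolding mu_alt D_def d_def by (simp add: sum_subtractf)
    thus "(D - d k) / mu lam k = mu lamu k / mu lam k - 1"
      using pos[of k] by (simp add: field_simps)
  qed
  also have "\<dots> = (\<Sum>k\<in>UNIV. mu lamu k / mu lam k) - n"
    unfolding n_def by (simp add: sum_subtractf)
  finally have eq: "(\<Sum>i\<in>UNIV. f_i i lam * (lamu $ i - lam $ i)) = (\<Sum>k\<in>UNIV. mu lamu k / mu lam k) - n" .
  have ge: "(\<Sum>k\<in>UNIV. mu lamu k / mu lam k) \<ge> eps * S"
    unfolding S_def sum_distrib_left
    by (intro sum_mono) (use pos epsle in \<open>auto intro: divide_right_mono less_imp_le\<close>)
  have c2: "(\<Sum>i\<in>UNIV. f_i i lam * (lamu $ i - lam $ i)) \<ge> eps / 2 * S"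
    using c1' eq ge by linarith
  have "(\<Sum>i\<in>UNIV. f_i i lam) = (\<Sum>i\<in>UNIV. S - 1 / mu lam i)"
    using fi_formula[OF assms(2)] unfolding S_def by simp
  also have "\<dots> = (n - 1) * S" unfolding n_def S_def
    by (simp add: sum_subtractf algebra_simps)
  finally have F: "(\<Sum>i\<in>UNIV. f_i i lam) = (n - 1) * S" .
  have c3: "eps / 2 * S = eps / (2 * (n - 1)) * (\<Sum>i\<in>UNIV. f_i i lam)"
    unfolding F using n2 by (simp add: field_simps)
  show ?thesis using c1 c2 c3 unfolding S_def n_def by blast
qed

end
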